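(* Let $n_d\ge 1$, let $S_1,\dots,S_{n_d}>0$, and let $\underline{P_0}\le\overline{P_0}$ be real numbers. For $S>0$ define $\mathcal{X}(S,\underline{P_0},\overline{P_0})=\{(P,Q)\in\mathbb{R}^2: S\underline{P_0}\le P\le S\overline{P_0},\ Q^2\le S^2-P^2\}$. Then $$\bigoplus_{i=1}^{n_d}\mathcal{X}(S_i,\underline{P_0},\overline{P_0})=\mathcal{X}\Big(\sum_{i=1}^{n_d}S_i,\underline{P_0},\overline{P_0}\Big).$$
   Context: $\oplus$ denotes the Minkowski sum $A\oplus B=\{a+b: a\in A, b\in B\}$. The set $\mathcal{X}(S,\underline{P},\overline{P})$ is the feasible real/reactive power set of an inverter with apparent power rating $S$ and normalized real power bounds $\underline{P},\overline{P}$. *)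

theory Defs
  imports "HOL-Analysis.Analysis"
begin

definition feasible_set :: "real \<Rightarrow> real \<Rightarrow> real \<Rightarrow> (real \<times> real) set" where
  "feasible_set S Plo Phi = {(P, Q). S * Plo \<le> P \<and> P \<le> S * Phi \<and> Q\<^sup>2 \<le> S\<^sup>2 - P\<^sup>2}"

text \<open>Binary Minkowski sum.\<close>
definition minkowski_sum :: "'a::ab_group_add set \<Rightarrow> 'a set \<Rightarrow> 'a set" where
  "minkowski_sum A B = {a + b | a b. a \<in> A \<and> b \<in> B}"

text \<open>Iterated Minkowski sum of A 1, ..., A n (n \<ge> 1).\<close>
fun minkowski_sum_n :: "(nat \<Rightarrow> 'a::ab_group_add set) \<Rightarrow> nat \<Rightarrow> 'a set" where
  "minkowski_sum_n A 0 = {0}"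
| "minkowski_sum_n A (Suc n) = minkowski_sum (minkowski_sum_n A n) (A (Suc n))"

end

theory Submission
  imports Defs
begin

lemma scale_mem:
  assumes "t > 0" "(P, Q) \<in> feasible_set S Plo Phi"
  shows "(t*P, t*Q) \<in> feasible_set (t*S) Plo Phi"
proof -
  have h: "S * Plo \<le> P" "P \<le> S * Phi" "Q\<^sup>2 \<le> S\<^sup>2 - P\<^sup>2"
    using assms(2) by (auto simp: feasible_set_def)
  have "(t*Q)\<^sup>2 \<le> (t*S)\<^sup>2 - (t*P)\<^sup>2"
  proof -
    have "t\<^sup>2 * Q\<^sup>2 \<le> t\<^sup>2 * (S\<^sup>2 - P\<^sup>2)" using h(3) by (simp add: mult_left_mono)
    thus ?thesis by (simp add: power_mult_distrib algebra_simps)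
  qed
  moreover have "t*S*Plo \<le> t*P" using h(1) assms(1) by (simp add: mult.assoc)
  moreover have "t*P \<le> t*S*Phi" using h(2) assms(1) by (simp add: mult.assoc)
  ultimately show ?thesis by (simp add: feasible_set_def)
qed

lemma binary:
  assumes "a > 0" "b > 0"
  shows "minkowski_sum (feasible_set a Plo Phi) (feasible_set b Plo Phi) = feasible_set (a+b) Plo Phi"
proof
  show "minkowski_sum (feasible_set a Plo Phi) (feasible_set b Plo Phi) \<subseteq> feasible_set (a+b) Plo Phi"
  proof
    fix z assume "z \<in> minkowski_sum (feasible_set a Plo Phi) (feasible_set b Plo Phi)"
    then obtain P1 Q1 P2 Q2 where z: "z = (P1+P2, Q1+Q2)"
      and m1: "(P1,Q1) \<in> feasible_set a Plo Phi" and m2: "(P2,Q2) \<in> feasible_set b Plo Phi"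
      by (auto simp: minkowski_sum_def)
    have h1: "a * Plo \<le> P1" "P1 \<le> a * Phi" "Q1\<^sup>2 \<le> a\<^sup>2 - P1\<^sup>2"
      using m1 by (auto simp: feasible_set_def)
    have h2: "b * Plo \<le> P2" "P2 \<le> b * Phi" "Q2\<^sup>2 \<le> b\<^sup>2 - P2\<^sup>2"
      using m2 by (auto simp: feasible_set_def)
    have s1: "sqrt (P1\<^sup>2 + Q1\<^sup>2) \<le> a"
      using h1(3) assms(1) by (intro real_le_lsqrt) auto
    have s2: "sqrt (P2\<^sup>2 + Q2\<^sup>2) \<le> b"
      using h2(3) assms(2) by (intro real_le_lsqrt) auto
    have "sqrt ((P1+P2)\<^sup>2 + (Q1+Q2)\<^sup>2) \<le> sqrt (P1\<^sup>2 + Q1\<^sup>2) + sqrt (P2\<^sup>2 + Q2\<^sup>2)"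
      by (rule real_sqrt_sum_squares_triangle_ineq)
    also have "\<dots> \<le> a + b" using s1 s2 by simp
    finally have "sqrt ((P1+P2)\<^sup>2 + (Q1+Q2)\<^sup>2) \<le> a + b" .
    hence "(P1+P2)\<^sup>2 + (Q1+Q2)\<^sup>2 \<le> (a+b)\<^sup>2"
      using assms by (simp add: real_sqrt_le_iff sqrt_le_D)
    thus "z \<in> feasible_set (a+b) Plo Phi"
      using z h1 h2 by (simp add: feasible_set_def algebra_simps)
  qed
next
  show "feasible_set (a+b) Plo Phi \<subseteq> minkowski_sum (feasible_set a Plo Phi) (feasible_set b Plo Phi)"
  proof
    fix z assume zm: "z \<in> feasible_set (a+b) Plo Phi"
    obtain P Q where z: "z = (P,Q)" by fastforce
    define c where "c = a + b"
    have c: "c > 0" using assms c_def by simp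
    have m: "(P/c, Q/c) \<in> feasible_set 1 Plo Phi"
      using scale_mem[of "1/c" P Q c Plo Phi] zm z c c_def by simp
    have ma: "(a*(P/c), a*(Q/c)) \<in> feasible_set a Plo Phi"
      using scale_mem[OF assms(1) m] by simp
    have mb: "(b*(P/c), b*(Q/c)) \<in> feasible_set b Plo Phi"
      using scale_mem[OF assms(2) m] by simp
    have e1: "a*(P/c) + b*(P/c) = P" using c unfolding c_def by (simp add: add_divide_distrib[symmetric] distrib_right[symmetric])
    have e2: "a*(Q/c) + b*(Q/c) = Q" using c unfolding c_def by (simp add: add_divide_distrib[symmetric] distrib_right[symmetric])
    have "z = (a*(P/c), a*(Q/c)) + (b*(P/c), b*(Q/c))"
      using z e1 e2 by simp
    thus "z \<in> minkowski_sum (feasible_set a Plo Phi) (feasible_set b Plo Phi)"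
      using ma mb unfolding minkowski_sum_def by blast
  qed
qed

theorem theorem1:
  fixes nd :: nat and S :: "nat \<Rightarrow> real" and Plo Phi :: real
  assumes "nd \<ge> 1"
    and "\<And>i. i \<in> {1..nd} \<Longrightarrow> S i > 0"
    and "Plo \<le> Phi"
  shows "minkowski_sum_n (\<lambda>i. feasible_set (S i) Plo Phi) nd
         = feasible_set (\<Sum>i=1..nd. S i) Plo Phi"
  using assms(1,2)
proof (induction nd rule: nat_induct_at_least)
  case base
  have "minkowski_sum {0} (feasible_set (S 1) Plo Phi) = feasible_set (S 1) Plo Phi"
    unfolding minkowski_sum_def by (auto simp: zero_prod_def)
  thus ?case by simp
next
  case (Suc n)
  have IH: "minkowski_sum_n (\<lambda>i. feasible_set (S i) Plo Phi) n = feasible_set (\<Sum>i=1..n. S i) Plo Phi"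
    using Suc by auto
  have pos: "(\<Sum>i=1..n. S i) > 0"
    using Suc by (intro sum_pos) auto
  have "S (Suc n) > 0" using Suc by auto
  thus ?case using IH binary[OF pos] by (simp add: add.commute)
qed

end
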